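(* $\mathrm{Im}\,\Phi$ is a subgroup of $M(\mathcal{O}_{\bf q}(k^{n}))$, and it is normal in $M(\mathcal{O}_{\bf q}(k^{n}))$.
   Context: Let $k$ be a field, $n\ge1$, and ${\bf q}=(q_{ij})\in\mathcal M_n(k)$ with $q_{ij}q_{ji}=1$, $q_{ii}=1$ for all $i,j$. $\mathcal{O}_{\bf q}(k^{n})=k\langle x_1,\dots,x_n\rangle/\langle x_jx_i-q_{ij}x_ix_j\rangle$, graded with $\deg x_i=1$. $M(\mathcal{O}_{\bf q}(k^{n}))$ is the set of $A=(a_{ij})\in \mathrm{GL}_n(k)$ such that $x_i\mapsto \sum_j a_{ji}x_j$ extends to a graded algebra automorphism of $\mathcal{O}_{\bf q}(k^{n})$; it is a subgroup of $\mathrm{GL}_n(k)$ isomorphic to $\mathrm{Aut}_{\rm gr}(\mathcal{O}_{\bf q}(k^{n}))$. $B(i)=\{1\le i'\le n: q_{i'j}=q_{ij}\ \forall j\}$; the distinct blocks $B_1,\dots,B_m$ partition $\{1,\dots,n\}$. $\Phi:\prod_{w=1}^m\mathrm{GL}_{|B_w|}(k)\to\mathrm{GL}_n(k)$ sends $(M_1,\dots,M_m)$ to the matrix whose submatrix with rows $B_w$ and columns $B_v$ (indices in increasing order) is $\delta_{wv}M_w$; it is an injective group homomorphism, and $\mathrm{Im}\,\Phi$ is the set of ${\bf m}=(m_{ij})\in\mathrm{GL}_n(k)$ with $m_{ij}=0$ whenever $B(i)\ne B(j)$. *)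

theory Defs
  imports "HOL-Algebra.Coset"
begin

(* n x n matrices over a field, indices 0..n-1 (0-based), entries outside the range are 0 *)
type_synonym 'a mat = "nat \<Rightarrow> nat \<Rightarrow> 'a"

definition matmul :: "nat \<Rightarrow> 'a::field mat \<Rightarrow> 'a mat \<Rightarrow> 'a mat" where
  "matmul n A B = (\<lambda>i j. \<Sum>l<n. A i l * B l j)"

definition idm :: "nat \<Rightarrow> 'a::field mat" where
  "idm n = (\<lambda>i j. if i = j \<and> i < n then 1 else 0)"

definition is_nmat :: "nat \<Rightarrow> 'a::field mat \<Rightarrow> bool" where
  "is_nmat n A \<longleftrightarrow> (\<forall>i j. (n \<le> i \<or> n \<le> j) \<longrightarrow> A i j = 0)"

definition GL :: "nat \<Rightarrow> 'a::field mat set" where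
  "GL n = {A. is_nmat n A \<and> (\<exists>B. is_nmat n B \<and> matmul n A B = idm n \<and> matmul n B A = idm n)}"

(* Free algebra k<x_0,...,x_{n-1}>: finitely supported functions on words (letters < n) *)
type_synonym 'a fa = "nat list \<Rightarrow> 'a"

definition fa_carrier :: "nat \<Rightarrow> 'a::field fa set" where
  "fa_carrier n = {f. finite {w. f w \<noteq> 0} \<and> (\<forall>w. f w \<noteq> 0 \<longrightarrow> set w \<subseteq> {..<n})}"

definition fa_mult :: "'a::field fa \<Rightarrow> 'a fa \<Rightarrow> 'a fa" where
  "fa_mult f g = (\<lambda>w. \<Sum>i\<le>length w. f (take i w) * g (drop i w))"

definition fa_word :: "nat list \<Rightarrow> 'a::field fa" where
  "fa_word w = (\<lambda>u. if u = w then 1 else 0)"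

definition qrel :: "'a::field mat \<Rightarrow> nat \<Rightarrow> nat \<Rightarrow> 'a fa" where
  "qrel q i j = (\<lambda>u. fa_word [j, i] u - q i j * fa_word [i, j] u)"

inductive_set qideal :: "nat \<Rightarrow> 'a::field mat \<Rightarrow> 'a fa set" for n q where
  zero: "(\<lambda>_. 0) \<in> qideal n q"
| add: "f \<in> qideal n q \<Longrightarrow> g \<in> qideal n q \<Longrightarrow> (\<lambda>u. f u + g u) \<in> qideal n q"
| gen: "i < n \<Longrightarrow> j < n \<Longrightarrow> a \<in> fa_carrier n \<Longrightarrow> b \<in> fa_carrier n \<Longrightarrow>
        fa_mult (fa_mult a (qrel q i j)) b \<in> qideal n q"

(* the unique algebra endomorphism of the free algebra with x_i \<mapsto> \<Sum>_j a_ji x_j *)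
definition fa_subst :: "'a::field mat \<Rightarrow> 'a fa \<Rightarrow> 'a fa" where
  "fa_subst A f = (\<lambda>u. \<Sum>w\<in>{w. f w \<noteq> 0 \<and> length w = length u}.
                         f w * (\<Prod>t<length u. A (u ! t) (w ! t)))"

(* M(O_q(k^n)): invertible A such that x_i \<mapsto> \<Sum>_j a_ji x_j extends to a (graded) algebra
   automorphism of O_q = free algebra / qideal: the substitution must preserve the ideal
   (well-defined on the quotient) and the induced map must be bijective on the quotient. *)
definition Mq :: "nat \<Rightarrow> 'a::field mat \<Rightarrow> 'a mat set" where
  "Mq n q = {A \<in> GL n.
      (\<forall>f \<in> qideal n q. fa_subst A f \<in> qideal n q)
    \<and> (\<forall>g \<in> fa_carrier n. \<exists>f \<in> fa_carrier n. (\<lambda>u. fa_subst A f u - g u) \<in> qideal n q)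
    \<and> (\<forall>f \<in> fa_carrier n. fa_subst A f \<in> qideal n q \<longrightarrow> f \<in> qideal n q)}"

definition Mgrp :: "nat \<Rightarrow> 'a::field mat \<Rightarrow> 'a mat monoid" where
  "Mgrp n q = \<lparr>carrier = Mq n q, mult = matmul n, one = idm n\<rparr>"

definition blk :: "nat \<Rightarrow> 'a mat \<Rightarrow> nat \<Rightarrow> nat set" where
  "blk n q i = {i'. i' < n \<and> (\<forall>j<n. q i' j = q i j)}"

(* Im Phi, via the characterization given in the context *)
definition ImPhi :: "nat \<Rightarrow> 'a::field mat \<Rightarrow> 'a mat set" where
  "ImPhi n q = {m \<in> GL n. \<forall>i<n. \<forall>j<n. blk n q i \<noteq> blk n q j \<longrightarrow> m i j = 0}"

end

theory Submission
  imports Defs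
begin


definition Wd :: "nat \<Rightarrow> nat \<Rightarrow> nat list set" where
  "Wd n L = {w. length w = L \<and> set w \<subseteq> {..<n}}"

lemma finite_Wd[simp]: "finite (Wd n L)"
  unfolding Wd_def using finite_lists_length_eq[of "{..<n}" L] by (simp add: conj_commute)

lemma Wd_0: "Wd n 0 = {[]}" by (auto simp: Wd_def)

lemma Wd_Suc: "Wd n (Suc L) = (\<lambda>(l,v). l # v) ` ({..<n} \<times> Wd n L)"
  by (auto simp: Wd_def length_Suc_conv image_def)

lemma sum_Wd_prod:
  "(\<Sum>v\<in>Wd n L. \<Prod>t<L. h t (v!t)) = (\<Prod>t<L. \<Sum>l<n. (h t l :: 'a::comm_semiring_1))"
proof (induction L arbitrary: h)
  case 0 then show ?case by (simp add: Wd_0)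
next
  case (Suc L)
  have inj: "inj_on (\<lambda>(l,v). l # v) ({..<n} \<times> Wd n L)" by (auto simp: inj_on_def)
  have "(\<Sum>v\<in>Wd n (Suc L). \<Prod>t<Suc L. h t (v!t))
      = (\<Sum>(l,v)\<in>{..<n} \<times> Wd n L. \<Prod>t<Suc L. h t ((l#v)!t))"
    unfolding Wd_Suc by (subst sum.reindex[OF inj]) (simp add: case_prod_unfold)
  also have "\<dots> = (\<Sum>(l,v)\<in>{..<n} \<times> Wd n L. h 0 l * (\<Prod>t<L. h (Suc t) (v!t)))"
    by (simp add: prod.lessThan_Suc_shift del: prod.lessThan_Suc)
  also have "\<dots> = (\<Sum>l<n. h 0 l) * (\<Sum>v\<in>Wd n L. \<Prod>t<L. h (Suc t) (v!t))"
    by (simp add: sum.cartesian_product[symmetric] sum_product)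
  also have "\<dots> = (\<Sum>l<n. h 0 l) * (\<Prod>t<L. \<Sum>l<n. h (Suc t) l)"
    using Suc.IH[of "\<lambda>t. h (Suc t)"] by simp
  finally show ?case by (simp add: prod.lessThan_Suc_shift del: prod.lessThan_Suc)
qed

lemma carrierD1: "f \<in> fa_carrier n \<Longrightarrow> finite {w. f w \<noteq> 0}" by (simp add: fa_carrier_def)
lemma carrierD2: "f \<in> fa_carrier n \<Longrightarrow> f w \<noteq> 0 \<Longrightarrow> set w \<subseteq> {..<n}" by (simp add: fa_carrier_def)

lemma fa_subst_alt:
  assumes "f \<in> fa_carrier n"
  shows "fa_subst A f u = (\<Sum>w\<in>Wd n (length u). f w * (\<Prod>t<length u. A (u!t) (w!t)))"
  unfolding fa_subst_def
  by (rule sum.mono_neutral_left) (use carrierD2[OF assms] finite_Wd[of n "length u", unfolded Wd_def] in \<open>auto simp: Wd_def\<close>)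

lemma nmat_out: "is_nmat n A \<Longrightarrow> n \<le> i \<Longrightarrow> A i j = 0" "is_nmat n A \<Longrightarrow> n \<le> j \<Longrightarrow> A i j = 0"
  by (auto simp: is_nmat_def)

lemma fa_subst_zero_word:
  assumes "is_nmat n A" "\<not> set u \<subseteq> {..<n}"
  shows "fa_subst A f u = 0"
proof -
  obtain t where t: "t < length u" "u!t \<ge> n" using assms(2) by (auto simp: in_set_conv_nth subset_iff)
  have z: "(\<Prod>t<length u. A (u!t) (w!t)) = 0" for w
    using t nmat_out[OF assms(1)] by (intro prod_zero) auto
  show ?thesis unfolding fa_subst_def by (rule sum.neutral) (auto simp only: z mult_zero_right)
qed

lemma fa_subst_carrier:
  assumes f: "f \<in> fa_carrier n" and A: "is_nmat n A"
  shows "fa_subst A f \<in> fa_carrier n"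
proof -
  have "{u. fa_subst A f u \<noteq> 0} \<subseteq> (\<Union>w\<in>{w. f w \<noteq> 0}. Wd n (length w))"
  proof
    fix u assume u: "u \<in> {u. fa_subst A f u \<noteq> 0}"
    then have s: "set u \<subseteq> {..<n}" using fa_subst_zero_word[OF A] by blast
    from u obtain w where "f w \<noteq> 0" "length w = length u"
      unfolding fa_subst_def by (metis (mono_tags, lifting) empty_Collect_eq mem_Collect_eq sum.empty)
    then show "u \<in> (\<Union>w\<in>{w. f w \<noteq> 0}. Wd n (length w))" using s by (auto simp: Wd_def)
  qed
  moreover have "finite (\<Union>w\<in>{w. f w \<noteq> 0}. Wd n (length w))" using carrierD1[OF f] by simp
  ultimately show ?thesis unfolding fa_carrier_def using fa_subst_zero_word[OF A]
    by (auto intro: finite_subset)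
qed

lemma carrier_add: assumes "f \<in> fa_carrier n" "g \<in> fa_carrier n" shows "(\<lambda>u. f u + g u) \<in> fa_carrier n"
proof -
  have "{w. f w + g w \<noteq> 0} \<subseteq> {w. f w \<noteq> 0} \<union> {w. g w \<noteq> 0}" by auto
  moreover have "f w + g w \<noteq> 0 \<Longrightarrow> set w \<subseteq> {..<n}" for w
    using carrierD2[OF assms(1), of w] carrierD2[OF assms(2), of w] by (cases "f w = 0") auto
  ultimately show ?thesis using carrierD1[OF assms(1)] carrierD1[OF assms(2)]
    unfolding fa_carrier_def by (auto intro: finite_subset)
qed
lemma carrier_diff: assumes "f \<in> fa_carrier n" "g \<in> fa_carrier n" shows "(\<lambda>u. f u - g u) \<in> fa_carrier n"
proof -
  have "{w. f w - g w \<noteq> 0} \<subseteq> {w. f w \<noteq> 0} \<union> {w. g w \<noteq> 0}" by auto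
  moreover have "f w - g w \<noteq> 0 \<Longrightarrow> set w \<subseteq> {..<n}" for w
    using carrierD2[OF assms(1), of w] carrierD2[OF assms(2), of w] by (cases "f w = 0") auto
  ultimately show ?thesis using carrierD1[OF assms(1)] carrierD1[OF assms(2)]
    unfolding fa_carrier_def by (auto intro: finite_subset)
qed
lemma carrier_smult: "f \<in> fa_carrier n \<Longrightarrow> (\<lambda>u. c * f u) \<in> fa_carrier n"
  unfolding fa_carrier_def by (auto intro: finite_subset[of _ "{w. f w \<noteq> 0}"])
lemma carrier_zero: "(\<lambda>_. 0) \<in> fa_carrier n" by (simp add: fa_carrier_def)
lemma carrier_sum: "finite S \<Longrightarrow> (\<And>k. k \<in> S \<Longrightarrow> F k \<in> fa_carrier n) \<Longrightarrow> (\<lambda>u. \<Sum>k\<in>S. F k u) \<in> fa_carrier n"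
  by (induction S rule: finite_induct) (auto simp: carrier_zero intro!: carrier_add)

lemma fa_subst_add: "f \<in> fa_carrier n \<Longrightarrow> g \<in> fa_carrier n \<Longrightarrow>
   fa_subst A (\<lambda>u. f u + g u) u = fa_subst A f u + fa_subst A g u"
  by (simp add: fa_subst_alt[OF carrier_add] fa_subst_alt distrib_right sum.distrib)
lemma fa_subst_diff: "f \<in> fa_carrier n \<Longrightarrow> g \<in> fa_carrier n \<Longrightarrow>
   fa_subst A (\<lambda>u. f u - g u) u = fa_subst A f u - fa_subst A g u"
  by (simp add: fa_subst_alt[OF carrier_diff] fa_subst_alt left_diff_distrib sum_subtractf)
lemma fa_subst_smult: "f \<in> fa_carrier n \<Longrightarrow>
   fa_subst A (\<lambda>u. c * f u) u = c * fa_subst A f u"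
  by (simp add: fa_subst_alt[OF carrier_smult] fa_subst_alt sum_distrib_left mult.assoc)
lemma fa_subst_sum: "finite S \<Longrightarrow> (\<And>k. k \<in> S \<Longrightarrow> F k \<in> fa_carrier n) \<Longrightarrow>
   fa_subst A (\<lambda>u. \<Sum>k\<in>S. F k u) u = (\<Sum>k\<in>S. fa_subst A (F k) u)"
proof -
  assume S: "finite S" and F: "\<And>k. k \<in> S \<Longrightarrow> F k \<in> fa_carrier n"
  have "fa_subst A (\<lambda>u. \<Sum>k\<in>S. F k u) u = (\<Sum>w\<in>Wd n (length u). \<Sum>k\<in>S. F k w * (\<Prod>t<length u. A (u!t) (w!t)))"
    by (simp add: fa_subst_alt[OF carrier_sum[OF S F]] sum_distrib_right)
  also have "\<dots> = (\<Sum>k\<in>S. \<Sum>w\<in>Wd n (length u). F k w * (\<Prod>t<length u. A (u!t) (w!t)))"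
    by (rule sum.swap)
  also have "\<dots> = (\<Sum>k\<in>S. fa_subst A (F k) u)"
    by (rule sum.cong) (simp_all add: fa_subst_alt[OF F])
  finally show ?thesis .
qed

lemma fa_subst_comp:
  assumes f: "f \<in> fa_carrier n" and A: "is_nmat n A" and B: "is_nmat n B"
  shows "fa_subst B (fa_subst A f) = fa_subst (matmul n B A) f"
proof
  fix u :: "nat list"
  let ?L = "length u"
  have "fa_subst B (fa_subst A f) u = (\<Sum>v\<in>Wd n ?L. (\<Sum>w\<in>Wd n ?L. f w * (\<Prod>t<?L. A (v!t) (w!t))) * (\<Prod>t<?L. B (u!t) (v!t)))"
    using fa_subst_alt[OF fa_subst_carrier[OF f A]] fa_subst_alt[OF f]
    by (simp add: Wd_def)
  also have "\<dots> = (\<Sum>w\<in>Wd n ?L. f w * (\<Sum>v\<in>Wd n ?L. (\<Prod>t<?L. B (u!t) (v!t) * A (v!t) (w!t))))"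
    by (simp add: sum_distrib_right sum_distrib_left prod.distrib mult_ac) (rule sum.swap)
  also have "\<dots> = (\<Sum>w\<in>Wd n ?L. f w * (\<Prod>t<?L. matmul n B A (u!t) (w!t)))"
  proof -
    have h: "\<And>w. (\<Sum>v\<in>Wd n ?L. \<Prod>t<?L. B (u!t) (v!t) * A (v!t) (w!t)) = (\<Prod>t<?L. \<Sum>l<n. B (u!t) l * A l (w!t))"
      by (rule sum_Wd_prod)
    show ?thesis by (simp only: h matmul_def)
  qed
  also have "\<dots> = fa_subst (matmul n B A) f u" by (simp add: fa_subst_alt[OF f])
  finally show "fa_subst B (fa_subst A f) u = fa_subst (matmul n B A) f u" .
qed

lemma fa_subst_id:
  assumes f: "f \<in> fa_carrier n"
  shows "fa_subst (idm n) f = f"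
proof
  fix u :: "nat list"
  let ?L = "length u"
  show "fa_subst (idm n) f u = f u"
  proof (cases "set u \<subseteq> {..<n}")
    case True
    have "(\<Prod>t<?L. idm n (u!t) (w!t)) = (if w = u then 1 else 0)" if wW: "w \<in> Wd n ?L" for w
    proof (cases "w = u")
      case True then show ?thesis using \<open>set u \<subseteq> {..<n}\<close> by (auto simp: idm_def intro!: prod.neutral) (meson lessThan_iff nth_mem subsetD)
    next
      case False
      then obtain t where "t < ?L" "u!t \<noteq> w!t" using wW by (auto simp: Wd_def list_eq_iff_nth_eq)
      then show ?thesis using False by (auto simp: idm_def intro!: prod_zero)
    qed
    note pr = this
    have "fa_subst (idm n) f u = (\<Sum>w\<in>Wd n ?L. f w * (if w = u then 1 else 0))"
      unfolding fa_subst_alt[OF f] by (intro sum.cong refl) (simp only: pr)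
    also have "\<dots> = (\<Sum>w\<in>Wd n ?L. if w = u then f w else 0)" by (intro sum.cong refl) simp
    also have "\<dots> = f u" using True by (subst sum.delta) (simp_all add: Wd_def[symmetric], simp add: Wd_def)
    finally show ?thesis .
  next
    case False
    then have "f u = 0" using carrierD2[OF f] by blast
    moreover have "is_nmat n (idm n :: 'a mat)" by (simp add: is_nmat_def idm_def)
    ultimately show ?thesis using fa_subst_zero_word False by metis
  qed
qed


lemma fa_mult_nz: "fa_mult f g u \<noteq> 0 \<Longrightarrow> \<exists>i\<le>length u. f (take i u) \<noteq> 0 \<and> g (drop i u) \<noteq> 0"
  unfolding fa_mult_def by (metis (no_types, lifting) atMost_iff mult_not_zero sum.neutral)

lemma carrier_mult:
  assumes f: "f \<in> fa_carrier n" and g: "g \<in> fa_carrier n"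
  shows "fa_mult f g \<in> fa_carrier n"
proof -
  have sub: "{u. fa_mult f g u \<noteq> 0} \<subseteq> (\<lambda>(v,w). v @ w) ` ({w. f w \<noteq> 0} \<times> {w. g w \<noteq> 0})"
  proof
    fix u assume "u \<in> {u. fa_mult f g u \<noteq> 0}"
    then obtain i where "f (take i u) \<noteq> 0" "g (drop i u) \<noteq> 0" using fa_mult_nz by blast
    then show "u \<in> (\<lambda>(v,w). v @ w) ` ({w. f w \<noteq> 0} \<times> {w. g w \<noteq> 0})"
      by (intro image_eqI[of _ _ "(take i u, drop i u)"]) auto
  qed
  have "set u \<subseteq> {..<n}" if nz: "fa_mult f g u \<noteq> 0" for u
  proof -
    obtain i where "f (take i u) \<noteq> 0" "g (drop i u) \<noteq> 0" using fa_mult_nz[OF nz] by blast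
    then have "set (take i u) \<subseteq> {..<n}" "set (drop i u) \<subseteq> {..<n}"
      using carrierD2[OF f] carrierD2[OF g] by auto
    then show ?thesis by (metis append_take_drop_id set_append Un_subset_iff)
  qed
  moreover have "finite {u. fa_mult f g u \<noteq> 0}"
    using sub carrierD1[OF f] carrierD1[OF g] by (auto intro: finite_subset)
  ultimately show ?thesis by (simp add: fa_carrier_def)
qed

lemma fa_mult_sum_right: "fa_mult f (\<lambda>u. \<Sum>k\<in>S. G k u) u = (\<Sum>k\<in>S. fa_mult f (G k) u)"
  unfolding fa_mult_def by (simp add: sum_distrib_left) (rule sum.swap)
lemma fa_mult_sum_left: "fa_mult (\<lambda>u. \<Sum>k\<in>S. G k u) f u = (\<Sum>k\<in>S. fa_mult (G k) f u)"
  unfolding fa_mult_def by (simp add: sum_distrib_right) (rule sum.swap)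
lemma fa_mult_smult_right: "fa_mult f (\<lambda>u. c * g u) u = c * fa_mult f g u"
  unfolding fa_mult_def by (simp add: sum_distrib_left mult_ac)
lemma fa_mult_smult_left: "fa_mult (\<lambda>u. c * g u) f u = c * fa_mult g f u"
  unfolding fa_mult_def by (simp add: sum_distrib_left mult_ac)

lemma fa_word_carrier: "set w \<subseteq> {..<n} \<Longrightarrow> fa_word w \<in> fa_carrier n"
  by (simp add: fa_carrier_def fa_word_def)

lemma fa_mult_unit_left: "fa_mult (fa_word []) f = f"
proof
  fix u :: "nat list"
  have "fa_mult (fa_word []) f u = (\<Sum>i\<le>length u. if i = 0 then f u else 0)"
    unfolding fa_mult_def fa_word_def by (intro sum.cong refl) auto
  then show "fa_mult (fa_word []) f u = f u" by simp
qed

lemma fa_mult_unit_right: "fa_mult f (fa_word []) = f"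
proof
  fix u :: "nat list"
  have "fa_mult f (fa_word []) u = (\<Sum>i\<le>length u. if i = length u then f u else 0)"
    unfolding fa_mult_def fa_word_def by (intro sum.cong refl) auto
  then show "fa_mult f (fa_word []) u = f u" by simp
qed

lemma qrel_carrier: "i < n \<Longrightarrow> j < n \<Longrightarrow> qrel q i j \<in> fa_carrier n"
  unfolding qrel_def by (intro carrier_diff carrier_smult fa_word_carrier) auto

lemma qrel_in: "i < n \<Longrightarrow> j < n \<Longrightarrow> qrel q i j \<in> qideal n q"
  using qideal.gen[of i n j "fa_word []" "fa_word []" q]
  by (simp add: fa_word_carrier fa_mult_unit_left fa_mult_unit_right)

lemma qideal_carrier: "f \<in> qideal n q \<Longrightarrow> f \<in> fa_carrier n"
  by (induction rule: qideal.induct)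
     (auto intro: carrier_zero carrier_add carrier_mult qrel_carrier)

lemma qideal_smult: "f \<in> qideal n q \<Longrightarrow> (\<lambda>u. c * f u) \<in> qideal n q"
proof (induction rule: qideal.induct)
  case zero then show ?case using qideal.zero by simp
next
  case (add f g) then show ?case using qideal.add[OF add.IH] by (simp add: distrib_left)
next
  case (gen i j a b)
  have "(\<lambda>u. c * fa_mult (fa_mult a (qrel q i j)) b u) = fa_mult (fa_mult (\<lambda>u. c * a u) (qrel q i j)) b"
    by (simp add: fa_mult_smult_left[symmetric])
  then show ?case using qideal.gen[OF gen(1,2) carrier_smult[OF gen(3)] gen(4)] by simp
qed

lemma qideal_diff: "f \<in> qideal n q \<Longrightarrow> g \<in> qideal n q \<Longrightarrow> (\<lambda>u. f u - g u) \<in> qideal n q"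
  using qideal.add[OF _ qideal_smult[of g n q "-1"], of f] by simp

lemma qideal_sum: "finite S \<Longrightarrow> (\<And>k. k \<in> S \<Longrightarrow> F k \<in> qideal n q) \<Longrightarrow> (\<lambda>u. \<Sum>k\<in>S. F k u) \<in> qideal n q"
  by (induction S rule: finite_induct) (auto intro: qideal.zero qideal.add)

lemma fa_mult_cong: "f = f' \<Longrightarrow> g = g' \<Longrightarrow> fa_mult f g = fa_mult f' g'" by simp

lemma Wd_append_bij:
  assumes "i \<le> L"
  shows "bij_betw (\<lambda>(a,b). a @ b) (Wd n i \<times> Wd n (L - i)) (Wd n L)"
proof (rule bij_betwI')
  fix x y assume x: "x \<in> Wd n i \<times> Wd n (L - i)" and y: "y \<in> Wd n i \<times> Wd n (L - i)"
  obtain a b c d where xy: "x = (a,b)" "y = (c,d)" by (cases x, cases y)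
  have "length a = length c" using x y xy by (simp add: Wd_def)
  then show "((case x of (a, b) \<Rightarrow> a @ b) = (case y of (a, b) \<Rightarrow> a @ b)) = (x = y)"
    using xy append_eq_append_conv[of a c b d] by simp
next
  fix x assume "x \<in> Wd n i \<times> Wd n (L - i)" then show "(case x of (a, b) \<Rightarrow> a @ b) \<in> Wd n L"
    using assms by (auto simp: Wd_def)
next
  fix y assume y: "y \<in> Wd n L"
  have "(take i y, drop i y) \<in> Wd n i \<times> Wd n (L - i)"
    using y assms set_take_subset[of i y] set_drop_subset[of i y] by (auto simp: Wd_def)
  then show "\<exists>x\<in>Wd n i \<times> Wd n (L - i). y = (case x of (a, b) \<Rightarrow> a @ b)"
    by (intro bexI[of _ "(take i y, drop i y)"]) auto
qed

lemma prod_split: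
  fixes L i :: nat
  assumes "i \<le> L"
  shows "(\<Prod>t<L. F t) = (\<Prod>t<i. F t) * (\<Prod>t<L - i. F (i + t))"
proof -
  have "{..<L} = {..<i} \<union> {i..<L}" using assms by auto
  then have "(\<Prod>t<L. F t) = (\<Prod>t<i. F t) * (\<Prod>t\<in>{i..<L}. F t)"
    by (simp add: prod.union_disjoint ivl_disj_int)
  also have "(\<Prod>t\<in>{i..<L}. F t) = (\<Prod>t<L - i. F (i + t))"
    using assms by (intro prod.reindex_bij_witness[of _ "\<lambda>t. i + t" "\<lambda>t. t - i"]) auto
  finally show ?thesis .
qed

lemma fa_subst_mult:
  assumes f: "f \<in> fa_carrier n" and g: "g \<in> fa_carrier n"
  shows "fa_subst A (fa_mult f g) = fa_mult (fa_subst A f) (fa_subst A g)"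
proof
  fix u :: "nat list"
  let ?L = "length u"
  let ?P = "\<lambda>u w. \<Prod>t<length u. A (u!t) (w!t)"
  have "fa_subst A (fa_mult f g) u = (\<Sum>w\<in>Wd n ?L. (\<Sum>i\<le>?L. f (take i w) * g (drop i w)) * ?P u w)"
    unfolding fa_subst_alt[OF carrier_mult[OF f g]] by (intro sum.cong refl) (simp add: Wd_def fa_mult_def)
  also have "\<dots> = (\<Sum>i\<le>?L. \<Sum>w\<in>Wd n ?L. f (take i w) * g (drop i w) * ?P u w)"
    by (simp add: sum_distrib_right) (rule sum.swap)
  also have "\<dots> = (\<Sum>i\<le>?L. fa_subst A f (take i u) * fa_subst A g (drop i u))"
  proof (rule sum.cong[OF refl])
    fix i assume "i \<in> {..?L}"
    then have i: "i \<le> ?L" by simp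
    have "(\<Sum>w\<in>Wd n ?L. f (take i w) * g (drop i w) * ?P u w)
       = (\<Sum>(a,b)\<in>Wd n i \<times> Wd n (?L - i). f (take i (a@b)) * g (drop i (a@b)) * ?P u (a@b))"
      using sum.reindex_bij_betw[OF Wd_append_bij[OF i], of "\<lambda>w. f (take i w) * g (drop i w) * ?P u w"]
      by (simp add: case_prod_unfold)
    also have "\<dots> = (\<Sum>(a,b)\<in>Wd n i \<times> Wd n (?L - i). (f a * ?P (take i u) a) * (g b * ?P (drop i u) b))"
    proof (rule sum.cong[OF refl], clarify)
      fix a b assume ab: "a \<in> Wd n i" "b \<in> Wd n (?L - i)"
      have "?P u (a@b) = (\<Prod>t<i. A (u!t) ((a@b)!t)) * (\<Prod>t<?L - i. A (u!(i+t)) ((a@b)!(i+t)))"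
        by (rule prod_split[OF i])
      also have "\<dots> = ?P (take i u) a * ?P (drop i u) b"
        using ab i by (simp add: Wd_def nth_append min_def)
      finally show "f (take i (a@b)) * g (drop i (a@b)) * ?P u (a@b) = (f a * ?P (take i u) a) * (g b * ?P (drop i u) b)"
        using ab by (simp add: Wd_def)
    qed
    also have "\<dots> = (\<Sum>a\<in>Wd n i. f a * ?P (take i u) a) * (\<Sum>b\<in>Wd n (?L - i). g b * ?P (drop i u) b)"
      by (simp add: sum_product sum.cartesian_product)
    also have "\<dots> = fa_subst A f (take i u) * fa_subst A g (drop i u)"
      using i by (simp add: fa_subst_alt[OF f] fa_subst_alt[OF g] min_def)
    finally show "(\<Sum>w\<in>Wd n ?L. f (take i w) * g (drop i w) * ?P u w) = fa_subst A f (take i u) * fa_subst A g (drop i u)" .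
  qed
  also have "\<dots> = fa_mult (fa_subst A f) (fa_subst A g) u" by (simp add: fa_mult_def)
  finally show "fa_subst A (fa_mult f g) u = fa_mult (fa_subst A f) (fa_subst A g) u" .
qed




lemma matmul_assoc: "matmul n (matmul n A B) C = matmul n A (matmul n B C)"
  unfolding matmul_def
proof (rule ext, rule ext)
  fix i j
  have "(\<Sum>l<n. (\<Sum>k<n. A i k * B k l) * C l j) = (\<Sum>l<n. \<Sum>k<n. A i k * (B k l * C l j))"
    by (simp add: sum_distrib_right mult.assoc)
  also have "\<dots> = (\<Sum>k<n. \<Sum>l<n. A i k * (B k l * C l j))" by (rule sum.swap)
  also have "\<dots> = (\<Sum>k<n. A i k * (\<Sum>l<n. B k l * C l j))" by (simp add: sum_distrib_left)
  finally show "(\<Sum>l<n. (\<Sum>k<n. A i k * B k l) * C l j) = (\<Sum>k<n. A i k * (\<Sum>l<n. B k l * C l j))" .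
qed

lemma nmat_idm: "is_nmat n (idm n)" by (simp add: is_nmat_def idm_def)

lemma idm_left: assumes "is_nmat n A" shows "matmul n (idm n) A = A"
proof (rule ext, rule ext)
  fix i j
  have "matmul n (idm n) A i j = (\<Sum>l<n. if l = i then (if i < n then A i j else 0) else 0)"
    unfolding matmul_def idm_def by (intro sum.cong) auto
  also have "\<dots> = A i j" using assms by (simp add: is_nmat_def)
  finally show "matmul n (idm n) A i j = A i j" .
qed

lemma idm_right: assumes "is_nmat n A" shows "matmul n A (idm n) = A"
proof (rule ext, rule ext)
  fix i j
  have "matmul n A (idm n) i j = (\<Sum>l<n. if l = j then (if j < n then A i j else 0) else 0)"
    unfolding matmul_def idm_def by (intro sum.cong) auto
  also have "\<dots> = A i j" using assms by (simp add: is_nmat_def)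
  finally show "matmul n A (idm n) i j = A i j" .
qed

lemma nmat_matmul: "is_nmat n A \<Longrightarrow> is_nmat n B \<Longrightarrow> is_nmat n (matmul n A B)"
  unfolding is_nmat_def matmul_def by auto

lemma GL_mult: assumes "A \<in> GL n" "B \<in> GL n" shows "matmul n A B \<in> GL n"
proof -
  obtain A' where A': "is_nmat n A'" "matmul n A A' = idm n" "matmul n A' A = idm n" "is_nmat n A"
    using assms(1) by (auto simp: GL_def)
  obtain B' where B': "is_nmat n B'" "matmul n B B' = idm n" "matmul n B' B = idm n" "is_nmat n B"
    using assms(2) by (auto simp: GL_def)
  have "matmul n (matmul n A B) (matmul n B' A') = idm n"
    by (metis A' B' matmul_assoc idm_left)
  moreover have "matmul n (matmul n B' A') (matmul n A B) = idm n"
    by (metis A' B' matmul_assoc idm_left)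
  ultimately show ?thesis unfolding GL_def using A' B'
    by (auto intro!: exI[of _ "matmul n B' A'"] nmat_matmul)
qed

lemma GL_idm: "idm n \<in> GL n"
  unfolding GL_def using nmat_idm idm_left[OF nmat_idm] by blast

lemma Mq_GL: "A \<in> Mq n q \<Longrightarrow> A \<in> GL n" by (simp add: Mq_def)
lemma GL_nmat: "A \<in> GL n \<Longrightarrow> is_nmat n A" by (simp add: GL_def)

lemma Mq_pres: "A \<in> Mq n q \<Longrightarrow> f \<in> qideal n q \<Longrightarrow> fa_subst A f \<in> qideal n q"
  by (simp add: Mq_def)
lemma Mq_surj: "A \<in> Mq n q \<Longrightarrow> g \<in> fa_carrier n \<Longrightarrow> \<exists>f \<in> fa_carrier n. (\<lambda>u. fa_subst A f u - g u) \<in> qideal n q"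
  by (simp add: Mq_def)
lemma Mq_inj: "A \<in> Mq n q \<Longrightarrow> f \<in> fa_carrier n \<Longrightarrow> fa_subst A f \<in> qideal n q \<Longrightarrow> f \<in> qideal n q"
  by (simp add: Mq_def)

lemma zero_in_qideal': "(\<lambda>u. g u - g u) \<in> qideal n q"
  using qideal.zero by simp

lemma Mq_inverse:
  assumes X: "X \<in> Mq n q" and Y: "is_nmat n Y" and XY: "matmul n X Y = idm n" and YX: "matmul n Y X = idm n"
  shows "Y \<in> Mq n q"
proof -
  have Xn: "is_nmat n X" using X by (simp add: Mq_def GL_def)
  have "Y \<in> GL n" using Y Xn XY YX by (auto simp: GL_def)
  moreover have "fa_subst Y f \<in> qideal n q" if f: "f \<in> qideal n q" for f
  proof -
    have fc: "f \<in> fa_carrier n" using qideal_carrier[OF f] .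
    have "fa_subst X (fa_subst Y f) = f" using fa_subst_comp[OF fc Y Xn] XY fa_subst_id[OF fc] by simp
    then show ?thesis using Mq_inj[OF X fa_subst_carrier[OF fc Y]] f by simp
  qed
  moreover have "\<exists>f \<in> fa_carrier n. (\<lambda>u. fa_subst Y f u - g u) \<in> qideal n q" if g: "g \<in> fa_carrier n" for g
  proof -
    have "fa_subst Y (fa_subst X g) = g" using fa_subst_comp[OF g Xn Y] YX fa_subst_id[OF g] by simp
    then show ?thesis using fa_subst_carrier[OF g Xn] zero_in_qideal'[of g n q] by (intro bexI[of _ "fa_subst X g"]) auto
  qed
  moreover have "f \<in> qideal n q" if f: "f \<in> fa_carrier n" "fa_subst Y f \<in> qideal n q" for f
  proof -
    have "fa_subst X (fa_subst Y f) = f" using fa_subst_comp[OF f(1) Y Xn] XY fa_subst_id[OF f(1)] by simp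
    then show ?thesis using Mq_pres[OF X f(2)] by simp
  qed
  ultimately show ?thesis by (simp add: Mq_def)
qed

lemma Mq_mult:
  assumes X: "X \<in> Mq n q" and Y: "Y \<in> Mq n q"
  shows "matmul n X Y \<in> Mq n q"
proof -
  have Xn: "is_nmat n X" using X by (simp add: Mq_def GL_def)
  have Yn: "is_nmat n Y" using Y by (simp add: Mq_def GL_def)
  have comp: "fa_subst (matmul n X Y) f = fa_subst X (fa_subst Y f)" if "f \<in> fa_carrier n" for f
    using fa_subst_comp[OF that Yn Xn] by simp
  have "matmul n X Y \<in> GL n" using GL_mult Mq_GL X Y by blast
  moreover have "fa_subst (matmul n X Y) f \<in> qideal n q" if f: "f \<in> qideal n q" for f
    using comp[OF qideal_carrier[OF f]] Mq_pres[OF X Mq_pres[OF Y f]] by simp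
  moreover have "\<exists>f \<in> fa_carrier n. (\<lambda>u. fa_subst (matmul n X Y) f u - g u) \<in> qideal n q" if g: "g \<in> fa_carrier n" for g
  proof -
    obtain f1 where f1: "f1 \<in> fa_carrier n" "(\<lambda>u. fa_subst X f1 u - g u) \<in> qideal n q"
      using Mq_surj[OF X g] by blast
    obtain f2 where f2: "f2 \<in> fa_carrier n" "(\<lambda>u. fa_subst Y f2 u - f1 u) \<in> qideal n q"
      using Mq_surj[OF Y f1(1)] by blast
    have "fa_subst X (\<lambda>u. fa_subst Y f2 u - f1 u) \<in> qideal n q" using Mq_pres[OF X f2(2)] .
    then have "(\<lambda>u. fa_subst X (fa_subst Y f2) u - fa_subst X f1 u) \<in> qideal n q"
    proof -
      have "fa_subst X (\<lambda>u. fa_subst Y f2 u - f1 u) = (\<lambda>u. fa_subst X (fa_subst Y f2) u - fa_subst X f1 u)"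
        using fa_subst_diff[OF fa_subst_carrier[OF f2(1) Yn] f1(1), of X] by (intro ext) simp
      then show ?thesis using \<open>fa_subst X (\<lambda>u. fa_subst Y f2 u - f1 u) \<in> qideal n q\<close> by simp
    qed
    from qideal.add[OF this f1(2)]
    have "(\<lambda>u. fa_subst X (fa_subst Y f2) u - g u) \<in> qideal n q" by simp
    then show ?thesis using comp[OF f2(1)] f2(1) by (intro bexI[of _ f2]) auto
  qed
  moreover have "f \<in> qideal n q" if f: "f \<in> fa_carrier n" "fa_subst (matmul n X Y) f \<in> qideal n q" for f
    using f comp[OF f(1)] Mq_inj[OF X fa_subst_carrier[OF f(1) Yn]] Mq_inj[OF Y f(1)] by simp
  ultimately show ?thesis by (simp add: Mq_def)
qed

lemma idm_Mq: "idm n \<in> Mq n q"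
proof -
  have "\<exists>f \<in> fa_carrier n. (\<lambda>u. fa_subst (idm n) f u - g u) \<in> qideal n q" if g: "g \<in> fa_carrier n" for g
    using g fa_subst_id[OF g] zero_in_qideal'[of g n q] by (intro bexI[of _ g]) auto
  moreover have "\<forall>f\<in>qideal n q. fa_subst (idm n) f \<in> qideal n q" using fa_subst_id qideal_carrier by metis
  moreover have "\<forall>f\<in>fa_carrier n. fa_subst (idm n) f \<in> qideal n q \<longrightarrow> f \<in> qideal n q" using fa_subst_id by metis
  ultimately show ?thesis using GL_idm by (simp add: Mq_def)
qed

lemma GL_inv: "A \<in> GL n \<Longrightarrow> \<exists>B. is_nmat n B \<and> matmul n A B = idm n \<and> matmul n B A = idm n"
  by (simp add: GL_def)

lemma Mgrp_group: "group (Mgrp n q)"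
proof (rule groupI)
  show "x \<otimes>\<^bsub>Mgrp n q\<^esub> y \<in> carrier (Mgrp n q)" if "x \<in> carrier (Mgrp n q)" "y \<in> carrier (Mgrp n q)" for x y
    using that Mq_mult by (simp add: Mgrp_def)
  show "\<one>\<^bsub>Mgrp n q\<^esub> \<in> carrier (Mgrp n q)" using idm_Mq by (simp add: Mgrp_def)
  show "x \<otimes>\<^bsub>Mgrp n q\<^esub> y \<otimes>\<^bsub>Mgrp n q\<^esub> z = x \<otimes>\<^bsub>Mgrp n q\<^esub> (y \<otimes>\<^bsub>Mgrp n q\<^esub> z)" for x y z
    by (simp add: Mgrp_def matmul_assoc)
  show "\<one>\<^bsub>Mgrp n q\<^esub> \<otimes>\<^bsub>Mgrp n q\<^esub> x = x" if "x \<in> carrier (Mgrp n q)" for x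
    using that idm_left[OF GL_nmat[OF Mq_GL]] by (simp add: Mgrp_def)
  show "\<exists>y\<in>carrier (Mgrp n q). y \<otimes>\<^bsub>Mgrp n q\<^esub> x = \<one>\<^bsub>Mgrp n q\<^esub>" if x: "x \<in> carrier (Mgrp n q)" for x
  proof -
    obtain B where B: "is_nmat n B" "matmul n x B = idm n" "matmul n B x = idm n"
      using GL_inv[OF Mq_GL[of x n q]] x by (auto simp: Mgrp_def)
    then show ?thesis using Mq_inverse[of x n q B] x by (auto simp: Mgrp_def)
  qed
qed

lemma Mgrp_inv:
  assumes X: "X \<in> Mq n q" and Y: "is_nmat n Y" and XY: "matmul n X Y = idm n" and YX: "matmul n Y X = idm n"
  shows "inv\<^bsub>Mgrp n q\<^esub> X = Y"
proof -
  interpret group "Mgrp n q" by (rule Mgrp_group)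
  show ?thesis using inv_equality[of Y X] X Mq_inverse[OF X Y XY YX] YX by (simp add: Mgrp_def)
qed




lemma fa_mult_0: "fa_mult f g [] = f [] * g []"
  by (simp add: fa_mult_def)
lemma fa_mult_1: "fa_mult f g [x] = f [] * g [x] + f [x] * g []"
  by (simp add: fa_mult_def)
lemma fa_mult_2: "fa_mult f g [x,y] = f [] * g [x,y] + f [x] * g [y] + f [x,y] * g []"
  by (simp add: fa_mult_def numeral_2_eq_2)

lemma qrel_len:
  assumes "length w \<noteq> 2" shows "qrel q i j w = 0"
proof -
  have "w \<noteq> [j,i]" "w \<noteq> [i,j]" using assms by auto
  then show ?thesis unfolding qrel_def fa_word_def by simp
qed

lemma gen_val2: "fa_mult (fa_mult a (qrel q i j)) b [x,y] = a [] * qrel q i j [x,y] * b []"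
proof -
  have z: "qrel q i j [] = 0" "qrel q i j [x] = 0" "qrel q i j [y] = 0" by (simp_all add: qrel_len)
  show ?thesis unfolding fa_mult_2 fa_mult_1 fa_mult_0 z by simp
qed

lemma L1:
  assumes qd: "\<forall>i<n. q i i = 1" and f: "f \<in> qideal n q"
  shows "f [a,a] = 0"
  using f
proof (induction rule: qideal.induct)
  case (gen i j a' b')
  have "qrel q i j [a,a] = (if a = j \<and> a = i then 1 else 0) - q i j * (if a = i \<and> a = j then 1 else 0)"
    by (simp add: qrel_def fa_word_def)
  moreover have "q i i = 1" using qd gen(1) by blast
  ultimately have "qrel q i j [a,a] = 0" by auto
  then show ?case by (simp add: gen_val2)
next
  case zero then show ?case by simp
next
  case (add f g) then show ?case by simp
qed

lemma L2:
  assumes qs: "\<forall>i<n. \<forall>j<n. q i j * q j i = 1" and f: "f \<in> qideal n q" and ab: "a \<noteq> b"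
  shows "f [a,b] + q a b * f [b,a] = 0"
  using f
proof (induction rule: qideal.induct)
  case (gen i j a' b')
  have h0: "qrel q i j [a,b] + q a b * qrel q i j [b,a] = 0"
  proof -
    have r1: "qrel q i j [a,b] = (if a = j \<and> b = i then 1 else 0) - q i j * (if a = i \<and> b = j then 1 else 0)"
      by (simp add: qrel_def fa_word_def)
    have r2: "qrel q i j [b,a] = (if b = j \<and> a = i then 1 else 0) - q i j * (if b = i \<and> a = j then 1 else 0)"
      by (simp add: qrel_def fa_word_def)
    have qq: "q i j * q j i = 1" using qs gen(1,2) by blast
    show ?thesis
    proof (cases "a = j \<and> b = i")
      case True
      then have e: "a = j" "b = i" by auto
      have "qrel q i j [a,b] = 1" using r1 e ab by simp
      moreover have "qrel q i j [b,a] = - q i j" using r2 e ab by simp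
      moreover have "q a b * q i j = 1" using qq e by (simp add: mult.commute)
      ultimately show ?thesis by simp
    next
      case F1: False
      show ?thesis
      proof (cases "a = i \<and> b = j")
        case True
        then have e: "a = i" "b = j" by auto
        have c1: "\<not> (b = i \<and> a = j)" using F1 by blast
        have "qrel q i j [a,b] = - q i j" using r1 unfolding if_not_P[OF F1] if_P[OF True] by simp
        moreover have "qrel q i j [b,a] = 1" using r2 unfolding if_not_P[OF c1] if_P[OF conjI[OF e(2) e(1)]] by simp
        ultimately show ?thesis using e by simp
      next
        case False
        have c1: "\<not> (b = i \<and> a = j)" using F1 by blast
        have c2: "\<not> (b = j \<and> a = i)" using False by blast
        have "qrel q i j [a,b] = 0" using r1 unfolding if_not_P[OF F1] if_not_P[OF False] by simp
        moreover have "qrel q i j [b,a] = 0" using r2 unfolding if_not_P[OF c1] if_not_P[OF c2] by simp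
        ultimately show ?thesis by simp
      qed
    qed
  qed
  have h1: "a' [] * qrel q i j [a,b] * b' [] + q a b * (a' [] * qrel q i j [b,a] * b' [])
     = a' [] * b' [] * (qrel q i j [a,b] + q a b * qrel q i j [b,a])"
    by (simp add: algebra_simps)
  show ?case unfolding gen_val2 h1 h0 by simp
next
  case (add f g)
  have "f [a, b] + g [a, b] + q a b * (f [b, a] + g [b, a]) = (f [a,b] + q a b * f [b,a]) + (g [a,b] + q a b * g [b,a])"
    by (simp add: algebra_simps)
  then show ?case using add.IH by simp
next
  case zero then show ?case by simp
qed

lemma fa_subst_word: "fa_subst A (fa_word w) u = (if length w = length u then (\<Prod>t<length u. A (u!t) (w!t)) else 0)"
proof -
  have "{w'. fa_word w w' \<noteq> (0::'a) \<and> length w' = length u} = (if length w = length u then {w} else {})"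
    by (auto simp: fa_word_def)
  then show ?thesis unfolding fa_subst_def by (simp add: fa_word_def)
qed

lemma subst_qrel2:
  assumes "i < n" "j < n"
  shows "fa_subst X (qrel q i j) [x,y] = X x j * X y i - q i j * (X x i * X y j)"
proof -
  have c1: "fa_word [j,i] \<in> fa_carrier n" "fa_word [i,j] \<in> fa_carrier n" using assms by (auto intro!: fa_word_carrier)
  have "fa_subst X (qrel q i j) [x,y] = fa_subst X (fa_word [j,i]) [x,y] - q i j * fa_subst X (fa_word [i,j]) [x,y]"
    unfolding qrel_def fa_subst_diff[OF c1(1) carrier_smult[OF c1(2)]] fa_subst_smult[OF c1(2)] ..
  then show ?thesis by (simp add: fa_subst_word numeral_2_eq_2 lessThan_Suc)
qed

lemma E1:
  assumes qd: "\<forall>i<n. q i i = 1" and X: "X \<in> Mq n q" and ij: "i < n" "j < n"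
  shows "X a i * X a j * (1 - q i j) = 0"
proof -
  have "fa_subst X (qrel q i j) [a,a] = 0" using L1[OF qd Mq_pres[OF X qrel_in[OF ij]]] .
  then show ?thesis by (simp add: subst_qrel2[OF ij] algebra_simps)
qed

lemma E2:
  assumes qs: "\<forall>i<n. \<forall>j<n. q i j * q j i = 1" and X: "X \<in> Mq n q" and ij: "i < n" "j < n" and ab: "a \<noteq> b"
  shows "X a j * X b i * (1 - q a b * q i j) = X a i * X b j * (q i j - q a b)"
proof -
  have h: "fa_subst X (qrel q i j) [a,b] + q a b * fa_subst X (qrel q i j) [b,a] = 0"
    using L2[OF qs Mq_pres[OF X qrel_in[OF ij]] ab] .
  have "X a j * X b i * (1 - q a b * q i j) - X a i * X b j * (q i j - q a b)
     = fa_subst X (qrel q i j) [a,b] + q a b * fa_subst X (qrel q i j) [b,a]"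
    unfolding subst_qrel2[OF ij] by algebra
  then show ?thesis using h by simp
qed

lemma rowprop:
  assumes X: "X \<in> GL n" and ab: "a < n" "b < n" "a \<noteq> b" and c: "\<And>j. j < n \<Longrightarrow> X b j = c * X a j"
  shows False
proof -
  obtain B where B: "matmul n X B = idm n" using GL_inv[OF X] by blast
  have "matmul n X B b a = c * matmul n X B a a"
    unfolding matmul_def by (simp add: c sum_distrib_left mult.assoc)
  then have c0: "c = 0" using B ab by (simp add: idm_def)
  have "matmul n X B b b = 0" unfolding matmul_def by (simp add: c c0)
  then show False using B ab by (simp add: idm_def)
qed

lemma P1:
  assumes X: "X \<in> GL n"
    and E1: "\<And>a i j. a<n \<Longrightarrow> i<n \<Longrightarrow> j<n \<Longrightarrow> X a i * X a j * (1 - q i j) = 0"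
    and E2: "\<And>a b i j. a<n \<Longrightarrow> b<n \<Longrightarrow> i<n \<Longrightarrow> j<n \<Longrightarrow> a\<noteq>b \<Longrightarrow> X a j * X b i * (1 - q a b * q i j) = X a i * X b j * (q i j - q a b)"
    and qd: "\<And>i. i<n \<Longrightarrow> q i i = 1"
    and abi: "a<n" "b<n" "i<n" and nz: "X a i \<noteq> 0" "X b i \<noteq> 0"
  shows "q a b = 1"
proof (rule ccontr)
  assume p: "q a b \<noteq> 1"
  then have ab: "a \<noteq> b" using qd abi by auto
  have eq: "X a j * X b i = X a i * X b j" if j: "j < n" for j
  proof (cases "X a j = 0")
    case False
    then have "q i j = 1" using E1[OF abi(1,3) j] nz by simp
    then have "X a j * X b i * (1 - q a b) = X a i * X b j * (1 - q a b)" using E2[OF abi j ab] by simp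
    then show ?thesis using p by simp
  next
    case True
    have "X b j = 0"
    proof (rule ccontr)
      assume bj: "X b j \<noteq> 0"
      then have "q i j = 1" using E1[OF abi(2,3) j] nz by simp
      then have "0 = X a i * X b j * (1 - q a b)" using E2[OF abi j ab] True by simp
      then show False using nz bj p by simp
    qed
    then show ?thesis using True by simp
  qed
  have "X b j = (X b i / X a i) * X a j" if "j < n" for j
    using eq[OF that] nz by (simp add: field_simps)
  then show False using rowprop[OF X abi(1,2) ab] by blast
qed

lemma Pmain:
  assumes X: "X \<in> GL n"
    and E1: "\<And>a i j. a<n \<Longrightarrow> i<n \<Longrightarrow> j<n \<Longrightarrow> X a i * X a j * (1 - q i j) = 0"
    and E2: "\<And>a b i j. a<n \<Longrightarrow> b<n \<Longrightarrow> i<n \<Longrightarrow> j<n \<Longrightarrow> a\<noteq>b \<Longrightarrow> X a j * X b i * (1 - q a b * q i j) = X a i * X b j * (q i j - q a b)"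
    and qd: "\<And>i. i<n \<Longrightarrow> q i i = 1"
    and abij: "a<n" "b<n" "i<n" "j<n" and nz: "X a i \<noteq> 0" "X b j \<noteq> 0"
  shows "q a b = q i j"
proof (rule ccontr)
  assume ne: "q a b \<noteq> q i j"
  show False
  proof (cases "a = b")
    case True
    then have "q i j = 1" using E1[OF abij(1,3,4)] nz by simp
    then show False using ne True qd abij by simp
  next
    case ab: False
    show False
    proof (cases "i = j")
      case True
      then have "q a b = 1" using P1[OF X E1 E2 qd abij(1,2,3)] nz by simp
      then show False using ne True qd abij by simp
    next
      case False
      have "X a i * X b j * (q i j - q a b) \<noteq> 0" using nz ne by simp
      then have "X a j \<noteq> 0" "X b i \<noteq> 0" using E2[OF abij ab] by auto
      then have "q i j = 1" using E1[OF abij(1,3,4)] nz by simp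
      moreover have "q a b = 1" using P1[OF X E1 E2 qd abij(1,2,3)] nz \<open>X b i \<noteq> 0\<close> by simp
      ultimately show False using ne by simp
    qed
  qed
qed

lemma P_Mq:
  assumes qs: "\<forall>i<n. \<forall>j<n. q i j * q j i = 1" and qd: "\<forall>i<n. q i i = 1" and X: "X \<in> Mq n q"
    and abij: "a<n" "b<n" "i<n" "j<n" and nz: "X a i \<noteq> 0" "X b j \<noteq> 0"
  shows "q a b = q i j"
  by (rule Pmain[OF Mq_GL[OF X] _ _ _ abij nz])
     (use E1[OF qd X] E2[OF qs X] qd in auto)




definition blockm :: "nat \<Rightarrow> 'a::field mat \<Rightarrow> 'a mat \<Rightarrow> bool" where
  "blockm n q m \<longleftrightarrow> (\<forall>i<n. \<forall>j<n. blk n q i \<noteq> blk n q j \<longrightarrow> m i j = 0)"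

lemma blk_eqD:
  assumes "i < n" "j < n" "blk n q i = blk n q j" "k < n"
  shows "q i k = q j k"
proof -
  have "i \<in> blk n q i" using assms(1) unfolding blk_def by simp
  then have "i \<in> blk n q j" unfolding assms(3) .
  then show ?thesis using assms(4) unfolding blk_def by simp
qed

lemma blk_eqI: "(\<And>k. k < n \<Longrightarrow> q i k = q j k) \<Longrightarrow> blk n q i = blk n q j"
  by (auto simp: blk_def)

lemma ImPhi_block: "m \<in> ImPhi n q \<Longrightarrow> blockm n q m" by (simp add: ImPhi_def blockm_def)

lemma S2: "(\<Sum>x<n. \<Sum>y<n. g x y * fa_word [x,y] u) =
   (if length u = 2 \<and> u!0 < n \<and> u!1 < n then g (u!0) (u!1) else (0::'a::field))"
proof (cases "length u = 2")
  case True
  then obtain s t where u: "u = [s,t]"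
    by (auto simp: length_Suc_conv numeral_2_eq_2)
  have fw: "g x y * fa_word [x,y] u = (if x = s then (if y = t then g x y else 0) else 0)" for x y
    unfolding u fa_word_def by simp
  have "(\<Sum>x<n. \<Sum>y<n. g x y * fa_word [x,y] u) = (\<Sum>x<n. if x = s then (\<Sum>y<n. if y = t then g x y else 0) else 0)"
    unfolding fw by (intro sum.cong refl) (cases "x = s"; simp)
  also have "\<dots> = (\<Sum>x<n. if x = s then (if t < n then g x t else 0) else 0)"
    by (simp only: sum.delta[OF finite_lessThan] lessThan_iff)
  also have "\<dots> = (if s < n \<and> t < n then g s t else 0)"
    by (simp only: sum.delta[OF finite_lessThan] lessThan_iff) simp
  finally show ?thesis using u by simp
next
  case False
  then have "fa_word [x,y] u = (0::'a)" for x y by (auto simp: fa_word_def)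
  then show ?thesis using False by simp
qed

lemma block_q:
  assumes qs: "\<forall>i<n. \<forall>j<n. q i j * q j i = 1" and m: "blockm n q m"
    and st: "s < n" "t < n" "i < n" "j < n" and nz: "m s i \<noteq> 0" "m t j \<noteq> 0"
  shows "q s t = q i j"
proof -
  have b1: "blk n q s = blk n q i" using m st nz by (auto simp: blockm_def)
  have b2: "blk n q t = blk n q j" using m st nz by (auto simp: blockm_def)
  have "q s t = q i t" using blk_eqD[OF st(1,3) b1 st(2)] .
  moreover have "q t i = q j i" using blk_eqD[OF st(2,4) b2 st(3)] .
  moreover have "q i t * q t i = 1" "q i j * q j i = 1" using qs st by auto
  ultimately show ?thesis by (metis mult.commute mult.left_neutral mult.assoc)
qed

lemma subst_qrel_block:
  assumes qs: "\<forall>i<n. \<forall>j<n. q i j * q j i = 1" and m: "blockm n q m" and mn: "is_nmat n m"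
    and ij: "i < n" "j < n"
  shows "fa_subst m (qrel q i j) = (\<lambda>u. \<Sum>x<n. \<Sum>y<n. (m x j * m y i) * qrel q y x u)"
proof
  fix u :: "nat list"
  have c1: "fa_word [j,i] \<in> fa_carrier n" "fa_word [i,j] \<in> fa_carrier n" using ij by (auto intro!: fa_word_carrier)
  have L: "fa_subst m (qrel q i j) u = fa_subst m (fa_word [j,i]) u - q i j * fa_subst m (fa_word [i,j]) u"
    unfolding qrel_def fa_subst_diff[OF c1(1) carrier_smult[OF c1(2)]] fa_subst_smult[OF c1(2)] ..
  have "(\<Sum>x<n. \<Sum>y<n. (m x j * m y i) * qrel q y x u)
      = (\<Sum>x<n. \<Sum>y<n. (m x j * m y i) * fa_word [x,y] u) - (\<Sum>x<n. \<Sum>y<n. (m x j * m y i * q y x) * fa_word [y,x] u)"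
    by (simp add: qrel_def algebra_simps sum_subtractf)
  also have "(\<Sum>x<n. \<Sum>y<n. (m x j * m y i * q y x) * fa_word [y,x] u) = (\<Sum>x<n. \<Sum>y<n. (m y j * m x i * q x y) * fa_word [x,y] u)"
    by (rule sum.swap)
  finally have R: "(\<Sum>x<n. \<Sum>y<n. (m x j * m y i) * qrel q y x u) =
     (if length u = 2 \<and> u!0 < n \<and> u!1 < n then m (u!0) j * m (u!1) i else 0) -
     (if length u = 2 \<and> u!0 < n \<and> u!1 < n then m (u!1) j * m (u!0) i * q (u!0) (u!1) else 0)"
    by (simp only: S2)
  show "fa_subst m (qrel q i j) u = (\<Sum>x<n. \<Sum>y<n. (m x j * m y i) * qrel q y x u)"
  proof (cases "length u = 2")
    case True
    then obtain s t where u: "u = [s,t]"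
      by (auto simp: length_Suc_conv numeral_2_eq_2)
    have Lv: "fa_subst m (qrel q i j) u = m s j * m t i - q i j * (m s i * m t j)"
      using L by (simp add: u fa_subst_word numeral_2_eq_2 lessThan_Suc)
    show ?thesis
    proof (cases "s < n \<and> t < n")
      case True
      have eqf: "m t j * m s i * q s t = q i j * (m s i * m t j)"
      proof (cases "m s i = 0 \<or> m t j = 0")
        case False
        then have "q s t = q i j" using block_q[OF qs m _ _ ij] True by auto
        then show ?thesis by simp
      qed auto
      have R': "(\<Sum>x<n. \<Sum>y<n. (m x j * m y i) * qrel q y x u) = m s j * m t i - m t j * m s i * q s t"
        using R True by (simp add: u)
      show ?thesis unfolding Lv R' eqf by (rule refl)
    next
      case False
      then have "m s j * m t i - q i j * (m s i * m t j) = 0" using mn by (auto simp: is_nmat_def)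
      then show ?thesis using Lv R False by (simp add: u)
    qed
  next
    case False
    then have "fa_subst m (qrel q i j) u = 0" using L by (simp add: fa_subst_word)
    then show ?thesis using R False by simp
  qed
qed

lemma mult_sum2:
  "fa_mult (fa_mult a (\<lambda>u. \<Sum>x\<in>S. \<Sum>y\<in>T. c x y * r x y u)) b
   = (\<lambda>u. \<Sum>x\<in>S. \<Sum>y\<in>T. fa_mult (fa_mult (\<lambda>v. c x y * a v) (r x y)) b u)"
proof -
  have "fa_mult a (\<lambda>u. \<Sum>x\<in>S. \<Sum>y\<in>T. c x y * r x y u) = (\<lambda>v. \<Sum>x\<in>S. \<Sum>y\<in>T. fa_mult (\<lambda>v. c x y * a v) (r x y) v)"
    by (rule ext) (simp add: fa_mult_sum_right fa_mult_smult_right fa_mult_smult_left)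
  then show ?thesis by (intro ext) (simp add: fa_mult_sum_left)
qed

lemma block_pres:
  assumes qs: "\<forall>i<n. \<forall>j<n. q i j * q j i = 1" and m: "blockm n q m" and mn: "is_nmat n m"
    and f: "f \<in> qideal n q"
  shows "fa_subst m f \<in> qideal n q"
  using f
proof (induction rule: qideal.induct)
  case zero
  have "fa_subst m (\<lambda>_. 0) = (\<lambda>_. 0)" by (rule ext) (simp add: fa_subst_def)
  then show ?case using qideal.zero by simp
next
  case (add f g)
  have "fa_subst m (\<lambda>u. f u + g u) = (\<lambda>u. fa_subst m f u + fa_subst m g u)"
    by (rule ext) (rule fa_subst_add[OF qideal_carrier[OF add.hyps(1)] qideal_carrier[OF add.hyps(2)]])
  then show ?case using qideal.add[OF add.IH] by simp
next
  case (gen i j a b)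
  have ar: "fa_mult a (qrel q i j) \<in> fa_carrier n" using carrier_mult[OF gen(3) qrel_carrier[OF gen(1,2)]] .
  have "fa_subst m (fa_mult (fa_mult a (qrel q i j)) b)
     = fa_mult (fa_mult (fa_subst m a) (fa_subst m (qrel q i j))) (fa_subst m b)"
    using fa_subst_mult[OF ar gen(4)] fa_subst_mult[OF gen(3) qrel_carrier[OF gen(1,2)]] by simp
  also have "\<dots> = (\<lambda>u. \<Sum>x<n. \<Sum>y<n. fa_mult (fa_mult (\<lambda>v. (m x j * m y i) * fa_subst m a v) (qrel q y x)) (fa_subst m b) u)"
    unfolding subst_qrel_block[OF qs m mn gen(1,2)] by (rule mult_sum2)
  also have "\<dots> \<in> qideal n q"
    by (intro qideal_sum qideal.gen finite_lessThan) (auto intro!: carrier_smult fa_subst_carrier gen(3,4) mn)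
  finally show ?case .
qed




definition dg :: "nat \<Rightarrow> (nat \<Rightarrow> bool) \<Rightarrow> 'a::field mat" where
  "dg n P = (\<lambda>a b. if a = b \<and> a < n \<and> P a then 1 else 0)"

lemma nmat_dg: "is_nmat n (dg n P)" by (simp add: is_nmat_def dg_def)

lemma dg_right: "matmul n A (dg n P) a b = (if b < n \<and> P b then A a b else 0)"
proof -
  have "matmul n A (dg n P) a b = (\<Sum>l<n. if l = b then (if b < n \<and> P b then A a b else 0) else 0)"
    unfolding matmul_def dg_def by (intro sum.cong refl) auto
  also have "\<dots> = (if b < n \<and> P b then A a b else 0)" by (simp add: sum.delta)
  finally show ?thesis .
qed

lemma dg_left: "matmul n (dg n P) A a b = (if a < n \<and> P a then A a b else 0)"
proof -
  have "matmul n (dg n P) A a b = (\<Sum>l<n. if l = a then (if a < n \<and> P a then A a b else 0) else 0)"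
    unfolding matmul_def dg_def by (intro sum.cong refl) auto
  also have "\<dots> = (if a < n \<and> P a then A a b else 0)" by (simp add: sum.delta)
  finally show ?thesis .
qed

lemma block_inverse:
  assumes m: "blockm n q m" and mn: "is_nmat n m" and B: "is_nmat n B"
    and mB: "matmul n m B = idm n" and Bm: "matmul n B m = idm n"
  shows "blockm n q B"
  unfolding blockm_def
proof (intro allI impI)
  fix i j assume ij: "i < n" "j < n" and ne: "blk n q i \<noteq> blk n q j"
  define P where "P = (\<lambda>a. blk n q a = blk n q j)"
  let ?D = "dg n P :: 'a mat"
  have comm: "matmul n m ?D = matmul n ?D m"
  proof (intro ext)
    fix a b
    show "matmul n m ?D a b = matmul n ?D m a b"
    proof (cases "m a b = 0")
      case False
      then have ab: "a < n" "b < n" using nmat_out[OF mn] by (metis not_le)+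
      then have "blk n q a = blk n q b" using m False by (auto simp: blockm_def)
      then show ?thesis using ab by (simp add: dg_right dg_left P_def)
    qed (simp add: dg_right dg_left)
  qed
  have "matmul n B ?D = matmul n (matmul n B ?D) (matmul n m B)"
    using mB idm_right[OF nmat_matmul[OF B nmat_dg]] by simp
  also have "\<dots> = matmul n B (matmul n (matmul n ?D m) B)" by (simp add: matmul_assoc)
  also have "\<dots> = matmul n B (matmul n (matmul n m ?D) B)" by (simp add: comm)
  also have "\<dots> = matmul n (matmul n B m) (matmul n ?D B)" by (simp add: matmul_assoc)
  also have "\<dots> = matmul n ?D B" using Bm idm_left[OF nmat_matmul[OF nmat_dg B]] by simp
  finally have "matmul n B ?D i j = matmul n ?D B i j" by simp
  then show "B i j = 0" using ij ne by (simp add: dg_right dg_left P_def)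
qed

lemma blockm_Mq:
  assumes qs: "\<forall>i<n. \<forall>j<n. q i j * q j i = 1" and m: "blockm n q m" and mG: "m \<in> GL n"
  shows "m \<in> Mq n q"
proof -
  obtain B where B: "is_nmat n B" "matmul n m B = idm n" "matmul n B m = idm n" using GL_inv[OF mG] by blast
  have mn: "is_nmat n m" using mG by (simp add: GL_def)
  have Bb: "blockm n q B" using block_inverse[OF m mn B] .
  have "\<exists>f \<in> fa_carrier n. (\<lambda>u. fa_subst m f u - g u) \<in> qideal n q" if g: "g \<in> fa_carrier n" for g
  proof -
    have "fa_subst m (fa_subst B g) = g" using fa_subst_comp[OF g B(1) mn] B(2) fa_subst_id[OF g] by simp
    then show ?thesis using fa_subst_carrier[OF g B(1)] zero_in_qideal'[of g n q] by (intro bexI[of _ "fa_subst B g"]) auto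
  qed
  moreover have "f \<in> qideal n q" if f: "f \<in> fa_carrier n" "fa_subst m f \<in> qideal n q" for f
  proof -
    have "fa_subst B (fa_subst m f) = f" using fa_subst_comp[OF f(1) mn B(1)] B(3) fa_subst_id[OF f(1)] by simp
    then show ?thesis using block_pres[OF qs Bb B(1) f(2)] by simp
  qed
  ultimately show ?thesis using mG block_pres[OF qs m mn] by (simp add: Mq_def)
qed

lemma ImPhi_Mq:
  assumes qs: "\<forall>i<n. \<forall>j<n. q i j * q j i = 1" and m: "m \<in> ImPhi n q"
  shows "m \<in> Mq n q"
  using blockm_Mq[OF qs ImPhi_block[OF m]] m by (simp add: ImPhi_def)

lemma ImPhi_mult:
  assumes a: "a \<in> ImPhi n q" and b: "b \<in> ImPhi n q"
  shows "matmul n a b \<in> ImPhi n q"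
proof -
  have "matmul n a b i j = 0" if ij: "i < n" "j < n" "blk n q i \<noteq> blk n q j" for i j
    unfolding matmul_def
  proof (intro sum.neutral ballI)
    fix l assume "l \<in> {..<n}"
    then have ln: "l < n" by simp
    show "a i l * b l j = 0"
    proof (cases "blk n q i = blk n q l")
      case True
      then have "blk n q l \<noteq> blk n q j" using ij by simp
      then have "b l j = 0" using b ln ij by (simp add: ImPhi_def)
      then show ?thesis by simp
    next
      case False
      then have "a i l = 0" using a ln ij by (simp add: ImPhi_def)
      then show ?thesis by simp
    qed
  qed
  moreover have "matmul n a b \<in> GL n" using a b by (intro GL_mult) (simp_all add: ImPhi_def)
  ultimately show ?thesis by (simp add: ImPhi_def)
qed

lemma idm_ImPhi: "idm n \<in> ImPhi n q"
  using GL_idm by (simp add: ImPhi_def idm_def)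

lemma sum_nz: assumes "(\<Sum>l<n. f l) \<noteq> (0::'a::field)" shows "\<exists>l<n. f l \<noteq> 0"
proof (rule ccontr)
  assume "\<not> (\<exists>l<n. f l \<noteq> 0)"
  then have "\<forall>l\<in>{..<n}. f l = 0" by simp
  then have "(\<Sum>l<n. f l) = 0" by (rule sum.neutral)
  then show False using assms by simp
qed

lemma ImPhi_blk: "m \<in> ImPhi n q \<Longrightarrow> a < n \<Longrightarrow> l < n \<Longrightarrow> m a l \<noteq> 0 \<Longrightarrow> blk n q a = blk n q l"
  unfolding ImPhi_def by blast

lemma normal_part:
  assumes qs: "\<forall>i<n. \<forall>j<n. q i j * q j i = 1" and qd: "\<forall>i<n. q i i = 1"
    and X: "X \<in> Mq n q" and Y: "Y \<in> Mq n q" and XY: "matmul n X Y = idm n"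
    and m: "m \<in> ImPhi n q"
  shows "matmul n (matmul n X m) Y \<in> ImPhi n q"
proof -
  have mG: "m \<in> GL n" using m unfolding ImPhi_def by blast
  have G: "matmul n (matmul n X m) Y \<in> GL n"
    by (intro GL_mult Mq_GL[OF X] Mq_GL[OF Y] mG)
  have "matmul n (matmul n X m) Y i j = 0" if ij: "i < n" "j < n" "blk n q i \<noteq> blk n q j" for i j
  proof (rule ccontr)
    assume "matmul n (matmul n X m) Y i j \<noteq> 0"
    then have "(\<Sum>l<n. matmul n X m i l * Y l j) \<noteq> 0" by (simp only: matmul_def[of n "matmul n X m"] not_False_eq_True)
    then obtain l where l: "l < n" "matmul n X m i l * Y l j \<noteq> 0" using sum_nz by blast
    then have "(\<Sum>a<n. X i a * m a l) \<noteq> 0" by (simp add: matmul_def)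
    then obtain a where a: "a < n" "X i a * m a l \<noteq> 0" using sum_nz by blast
    have nz: "X i a \<noteq> 0" "m a l \<noteq> 0" "Y l j \<noteq> 0" using a l by auto
    have bal: "blk n q a = blk n q l" using ImPhi_blk[OF m a(1) l(1) nz(2)] .
    have "q i k = q j k" if k: "k < n" for k
    proof -
      have "matmul n X Y k k = 1" using XY k by (simp add: idm_def)
      then have "(\<Sum>c<n. X k c * Y c k) \<noteq> 0" by (simp add: matmul_def)
      then obtain c where c: "c < n" "X k c * Y c k \<noteq> 0" using sum_nz by blast
      have c2: "X k c \<noteq> 0" "Y c k \<noteq> 0" using c by auto
      have "q i k = q a c" using P_Mq[OF qs qd X ij(1) k a(1) c(1) nz(1) c2(1)] .
      also have "\<dots> = q l c" using blk_eqD[OF a(1) l(1) bal c(1)] .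
      also have "\<dots> = q j k" using P_Mq[OF qs qd Y l(1) c(1) ij(2) k nz(3) c2(2)] .
      finally show ?thesis .
    qed
    then have "blk n q i = blk n q j" by (rule blk_eqI)
    then show False using ij by simp
  qed
  then show ?thesis using G unfolding ImPhi_def by blast
qed

theorem lemma4p4:
  fixes n :: nat and q :: "'a::field mat"
  assumes "1 \<le> n"
    and "\<forall>i<n. \<forall>j<n. q i j * q j i = 1"
    and "\<forall>i<n. q i i = 1"
  shows "subgroup (ImPhi n q) (Mgrp n q) \<and> ImPhi n q \<lhd> Mgrp n q"
proof -
  interpret group "Mgrp n q" by (rule Mgrp_group)
  have sub: "subgroup (ImPhi n q) (Mgrp n q)"
  proof (rule subgroupI)
    show "ImPhi n q \<subseteq> carrier (Mgrp n q)" using ImPhi_Mq[OF assms(2)] by (auto simp: Mgrp_def)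
    show "ImPhi n q \<noteq> {}" using idm_ImPhi by blast
    show "a \<otimes>\<^bsub>Mgrp n q\<^esub> b \<in> ImPhi n q" if "a \<in> ImPhi n q" "b \<in> ImPhi n q" for a b
      using ImPhi_mult[OF that] by (simp add: Mgrp_def)
    show "inv\<^bsub>Mgrp n q\<^esub> a \<in> ImPhi n q" if a: "a \<in> ImPhi n q" for a
    proof -
      have aG: "a \<in> GL n" using a by (simp add: ImPhi_def)
      obtain B where B: "is_nmat n B" "matmul n a B = idm n" "matmul n B a = idm n" using GL_inv[OF aG] by blast
      have "blockm n q B" using block_inverse[OF ImPhi_block[OF a] GL_nmat[OF aG] B] .
      moreover have "B \<in> GL n" using B GL_nmat[OF aG] by (auto simp: GL_def)
      ultimately have "B \<in> ImPhi n q" by (simp add: ImPhi_def blockm_def)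
      then show ?thesis using Mgrp_inv[OF ImPhi_Mq[OF assms(2) a] B] by simp
    qed
  qed
  have "x \<otimes>\<^bsub>Mgrp n q\<^esub> h \<otimes>\<^bsub>Mgrp n q\<^esub> inv\<^bsub>Mgrp n q\<^esub> x \<in> ImPhi n q"
    if x: "x \<in> carrier (Mgrp n q)" and h: "h \<in> ImPhi n q" for x h
  proof -
    have xM: "x \<in> Mq n q" using x by (simp add: Mgrp_def)
    obtain Y where Y: "is_nmat n Y" "matmul n x Y = idm n" "matmul n Y x = idm n"
      using GL_inv[OF Mq_GL[OF xM]] by blast
    have YM: "Y \<in> Mq n q" using Mq_inverse[OF xM Y] .
    have "inv\<^bsub>Mgrp n q\<^esub> x = Y" using Mgrp_inv[OF xM Y] .
    then show ?thesis using normal_part[OF assms(2,3) xM YM Y(2) h] by (simp add: Mgrp_def)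
  qed
  then show ?thesis using sub normal_inv_iff by blast
qed


end
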